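(* Let $\mathcal{G}$ be the set of $\mathbf{r}=(r_{12},r_{13},r_{14},r_{23},r_{24},r_{34})\in[0,\infty)^6$ with $H(\mathbf{r})\ge 0$ and $r_{ij}+r_{jk}>r_{ik}$ for all pairwise distinct $i,j,k$ (with $r_{ji}=r_{ij}$), and let $\mathcal{P}=\{\mathbf{r}\in\mathcal{G}:P(\mathbf{r})=0\}$, where $P(\mathbf{r})=r_{12}r_{34}+r_{14}r_{23}-r_{13}r_{24}$. If $\mathbf{r}\in\mathcal{P}$ then $H(\mathbf{r})=0$. Moreover $\mathcal{D}=\mathcal{M}^+\cap\mathcal{G}$, where $\mathcal{M}^+=\{\mathbf{r}\in[0,\infty)^6: I(\mathbf{r})=1,\ P(\mathbf{r})=0\}$ and $\mathcal{D}=\{\mathbf{r}\in\mathcal{G}: I(\mathbf{r})=1,\ P(\mathbf{r})=0,\ H(\mathbf{r})=0\}$.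
   Context: $H(\mathbf{r})$ is the Cayley–Menger determinant $H(\mathbf{r})=\det\begin{pmatrix}0&1&1&1&1\\1&0&r_{12}^2&r_{13}^2&r_{14}^2\\1&r_{12}^2&0&r_{23}^2&r_{24}^2\\1&r_{13}^2&r_{23}^2&0&r_{34}^2\\1&r_{14}^2&r_{24}^2&r_{34}^2&0\end{pmatrix}$ (equal to $288V^2$, $V$ the volume of the tetrahedron with these edge lengths). With masses $m_1,\dots,m_4>0$ and $M=\sum m_i$, $I(\mathbf{r})=\frac{1}{2M}\sum_{i<j}m_im_jr_{ij}^2$. *)

theory Defs
  imports "HOL-Analysis.Analysis"
begin

type_synonym cfg = "real \<times> real \<times> real \<times> real \<times> real \<times> real"

fun rd :: "cfg \<Rightarrow> nat \<Rightarrow> nat \<Rightarrow> real" where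
  "rd (r12, r13, r14, r23, r24, r34) i j =
     (if {i, j} = {1, 2} then r12 else
      if {i, j} = {1, 3} then r13 else
      if {i, j} = {1, 4} then r14 else
      if {i, j} = {2, 3} then r23 else
      if {i, j} = {2, 4} then r24 else
      if {i, j} = {3, 4} then r34 else 0)"

text \<open>Cayley--Menger matrix and determinant (rows/columns indexed 0..4).\<close>
definition CM_entry :: "cfg \<Rightarrow> nat \<Rightarrow> nat \<Rightarrow> real" where
  "CM_entry r a b = (if a = b then 0 else if a = 0 \<or> b = 0 then 1 else (rd r a b)\<^sup>2)"

definition CM :: "cfg \<Rightarrow> real^5^5" where
  "CM r = (\<chi> a b. CM_entry r (nat (Rep_bit1 a)) (nat (Rep_bit1 b)))"

definition H :: "cfg \<Rightarrow> real" where
  "H r = det (CM r)"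

definition nonneg6 :: "cfg \<Rightarrow> bool" where
  "nonneg6 r = (\<forall>i\<in>{1..4}. \<forall>j\<in>{1..4}. rd r i j \<ge> 0)"

definition P :: "cfg \<Rightarrow> real" where
  "P r = rd r 1 2 * rd r 3 4 + rd r 1 4 * rd r 2 3 - rd r 1 3 * rd r 2 4"

definition Imom :: "(nat \<Rightarrow> real) \<Rightarrow> cfg \<Rightarrow> real" where
  "Imom m r = (1 / (2 * (\<Sum>i\<in>{1..4}. m i))) *
      (\<Sum>(i,j)\<in>{(i,j). 1 \<le> i \<and> i < j \<and> j \<le> (4::nat)}. m i * m j * (rd r i j)\<^sup>2)"

definition G :: "cfg set" where
  "G = {r. nonneg6 r \<and> H r \<ge> 0 \<and>
          (\<forall>i\<in>{1..4}. \<forall>j\<in>{1..4}. \<forall>k\<in>{1..4}. i \<noteq> j \<and> j \<noteq> k \<and> i \<noteq> k \<longrightarrow>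
              rd r i j + rd r j k > rd r i k)}"

definition PP :: "cfg set" where
  "PP = {r \<in> G. P r = 0}"

definition Mplus :: "(nat \<Rightarrow> real) \<Rightarrow> cfg set" where
  "Mplus m = {r. nonneg6 r \<and> Imom m r = 1 \<and> P r = 0}"

definition DD :: "(nat \<Rightarrow> real) \<Rightarrow> cfg set" where
  "DD m = {r \<in> G. Imom m r = 1 \<and> P r = 0 \<and> H r = 0}"

end

theory Submission imports Defs begin
lemma UNIV_5: "(UNIV::5 set) = {0,1,2,3,4}"
proof -
  have "x = 0 \<or> x = 1 \<or> x = 2 \<or> x = 3 \<or> x = 4" for x :: 5
  proof (induct x)
    case (of_int z)
    then have "z = 0 \<or> z = 1 \<or> z = 2 \<or> z = 3 \<or> z = 4" by fastforce
    then show ?case by auto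
  qed
  then show ?thesis by auto
qed

lemma det5_sum: "det (A::real^5^5) = (\<Sum>p\<in>{p. p permutes {0,1,2,3,4::5}}. of_int (sign p) * (A$0$p 0 * A$1$p 1 * A$2$p 2 * A$3$p 3 * A$4$p 4))"
  unfolding det_def UNIV_5 by (simp add: ac_simps)

lemma det5: "det (A::real^5^5) = A$0$0 * A$1$1 * A$2$2 * A$3$3 * A$4$4 - A$0$0 * A$1$1 * A$2$2 * A$3$4 * A$4$3 - A$0$0 * A$1$1 * A$2$3 * A$3$2 * A$4$4 + A$0$0 * A$1$1 * A$2$3 * A$3$4 * A$4$2 + A$0$0 * A$1$1 * A$2$4 * A$3$2 * A$4$3 - A$0$0 * A$1$1 * A$2$4 * A$3$3 * A$4$2 - A$0$0 * A$1$2 * A$2$1 * A$3$3 * A$4$4 + A$0$0 * A$1$2 * A$2$1 * A$3$4 * A$4$3 + A$0$0 * A$1$2 * A$2$3 * A$3$1 * A$4$4 - A$0$0 * A$1$2 * A$2$3 * A$3$4 * A$4$1 - A$0$0 * A$1$2 * A$2$4 * A$3$1 * A$4$3 + A$0$0 * A$1$2 * A$2$4 * A$3$3 * A$4$1 + A$0$0 * A$1$3 * A$2$1 * A$3$2 * A$4$4 - A$0$0 * A$1$3 * A$2$1 * A$3$4 * A$4$2 - A$0$0 * A$1$3 * A$2$2 * A$3$1 * A$4$4 + A$0$0 * A$1$3 * A$2$2 * A$3$4 * A$4$1 + A$0$0 * A$1$3 * A$2$4 * A$3$1 * A$4$2 - A$0$0 * A$1$3 * A$2$4 * A$3$2 *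 A$4$1 - A$0$0 * A$1$4 * A$2$1 * A$3$2 * A$4$3 + A$0$0 * A$1$4 * A$2$1 * A$3$3 * A$4$2 + A$0$0 * A$1$4 * A$2$2 * A$3$1 * A$4$3 - A$0$0 * A$1$4 * A$2$2 * A$3$3 * A$4$1 - A$0$0 * A$1$4 * A$2$3 * A$3$1 * A$4$2 + A$0$0 * A$1$4 * A$2$3 * A$3$2 * A$4$1 - A$0$1 * A$1$0 * A$2$2 * A$3$3 * A$4$4 + A$0$1 * A$1$0 * A$2$2 * A$3$4 * A$4$3 + A$0$1 * A$1$0 * A$2$3 * A$3$2 * A$4$4 - A$0$1 * A$1$0 * A$2$3 * A$3$4 * A$4$2 - A$0$1 * A$1$0 * A$2$4 * A$3$2 * A$4$3 + A$0$1 * A$1$0 * A$2$4 * A$3$3 * A$4$2 + A$0$1 * A$1$2 * A$2$0 * A$3$3 * A$4$4 - A$0$1 * A$1$2 * A$2$0 * A$3$4 * A$4$3 - A$0$1 * A$1$2 * A$2$3 * A$3$0 * A$4$4 + A$0$1 * A$1$2 * A$2$3 * A$3$4 * A$4$0 + A$0$1 * A$1$2 * A$2$4 * A$3$0 * A$4$3 - A$0$1 * A$1$2 * A$2$4 * A$3$3 * A$4$0 - A$0$1 * A$1$3 * A$2$0 * A$3$2 * A$4$4 + A$0$1 * A$1$3 * A$2$0 * A$3$4 * A$4$2 + A$0$1 * A$1$3 * A$2$2 * A$3$0 * A$4$4 - A$0$1 * A$1$3 * A$2$2 * A$3$4 * A$4$0 - A$0$1 * A$1$3 * A$2$4 * A$3$0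 * A$4$2 + A$0$1 * A$1$3 * A$2$4 * A$3$2 * A$4$0 + A$0$1 * A$1$4 * A$2$0 * A$3$2 * A$4$3 - A$0$1 * A$1$4 * A$2$0 * A$3$3 * A$4$2 - A$0$1 * A$1$4 * A$2$2 * A$3$0 * A$4$3 + A$0$1 * A$1$4 * A$2$2 * A$3$3 * A$4$0 + A$0$1 * A$1$4 * A$2$3 * A$3$0 * A$4$2 - A$0$1 * A$1$4 * A$2$3 * A$3$2 * A$4$0 + A$0$2 * A$1$0 * A$2$1 * A$3$3 * A$4$4 - A$0$2 * A$1$0 * A$2$1 * A$3$4 * A$4$3 - A$0$2 * A$1$0 * A$2$3 * A$3$1 * A$4$4 + A$0$2 * A$1$0 * A$2$3 * A$3$4 * A$4$1 + A$0$2 * A$1$0 * A$2$4 * A$3$1 * A$4$3 - A$0$2 * A$1$0 * A$2$4 * A$3$3 * A$4$1 - A$0$2 * A$1$1 * A$2$0 * A$3$3 * A$4$4 + A$0$2 * A$1$1 * A$2$0 * A$3$4 * A$4$3 + A$0$2 * A$1$1 * A$2$3 * A$3$0 * A$4$4 - A$0$2 * A$1$1 * A$2$3 * A$3$4 * A$4$0 - A$0$2 * A$1$1 * A$2$4 * A$3$0 * A$4$3 + A$0$2 * A$1$1 * A$2$4 * A$3$3 * A$4$0 + A$0$2 * A$1$3 * A$2$0 * A$3$1 * A$4$4 - A$0$2 * A$1$3 * A$2$0 * A$3$4 * A$4$1 - A$0$2 * A$1$3 * A$2$1 * A$3$0 * A$4$4 + A$0$2 * A$1$3 * A$2$1 *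 A$3$4 * A$4$0 + A$0$2 * A$1$3 * A$2$4 * A$3$0 * A$4$1 - A$0$2 * A$1$3 * A$2$4 * A$3$1 * A$4$0 - A$0$2 * A$1$4 * A$2$0 * A$3$1 * A$4$3 + A$0$2 * A$1$4 * A$2$0 * A$3$3 * A$4$1 + A$0$2 * A$1$4 * A$2$1 * A$3$0 * A$4$3 - A$0$2 * A$1$4 * A$2$1 * A$3$3 * A$4$0 - A$0$2 * A$1$4 * A$2$3 * A$3$0 * A$4$1 + A$0$2 * A$1$4 * A$2$3 * A$3$1 * A$4$0 - A$0$3 * A$1$0 * A$2$1 * A$3$2 * A$4$4 + A$0$3 * A$1$0 * A$2$1 * A$3$4 * A$4$2 + A$0$3 * A$1$0 * A$2$2 * A$3$1 * A$4$4 - A$0$3 * A$1$0 * A$2$2 * A$3$4 * A$4$1 - A$0$3 * A$1$0 * A$2$4 * A$3$1 * A$4$2 + A$0$3 * A$1$0 * A$2$4 * A$3$2 * A$4$1 + A$0$3 * A$1$1 * A$2$0 * A$3$2 * A$4$4 - A$0$3 * A$1$1 * A$2$0 * A$3$4 * A$4$2 - A$0$3 * A$1$1 * A$2$2 * A$3$0 * A$4$4 + A$0$3 * A$1$1 * A$2$2 * A$3$4 * A$4$0 + A$0$3 * A$1$1 * A$2$4 * A$3$0 * A$4$2 - A$0$3 * A$1$1 * A$2$4 * A$3$2 * A$4$0 - A$0$3 * A$1$2 * A$2$0 * A$3$1 * A$4$4 + A$0$3 * A$1$2 * A$2$0 * A$3$4 * A$4$1 + A$0$3 * A$1$2 * A$2$1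 * A$3$0 * A$4$4 - A$0$3 * A$1$2 * A$2$1 * A$3$4 * A$4$0 - A$0$3 * A$1$2 * A$2$4 * A$3$0 * A$4$1 + A$0$3 * A$1$2 * A$2$4 * A$3$1 * A$4$0 + A$0$3 * A$1$4 * A$2$0 * A$3$1 * A$4$2 - A$0$3 * A$1$4 * A$2$0 * A$3$2 * A$4$1 - A$0$3 * A$1$4 * A$2$1 * A$3$0 * A$4$2 + A$0$3 * A$1$4 * A$2$1 * A$3$2 * A$4$0 + A$0$3 * A$1$4 * A$2$2 * A$3$0 * A$4$1 - A$0$3 * A$1$4 * A$2$2 * A$3$1 * A$4$0 + A$0$4 * A$1$0 * A$2$1 * A$3$2 * A$4$3 - A$0$4 * A$1$0 * A$2$1 * A$3$3 * A$4$2 - A$0$4 * A$1$0 * A$2$2 * A$3$1 * A$4$3 + A$0$4 * A$1$0 * A$2$2 * A$3$3 * A$4$1 + A$0$4 * A$1$0 * A$2$3 * A$3$1 * A$4$2 - A$0$4 * A$1$0 * A$2$3 * A$3$2 * A$4$1 - A$0$4 * A$1$1 * A$2$0 * A$3$2 * A$4$3 + A$0$4 * A$1$1 * A$2$0 * A$3$3 * A$4$2 + A$0$4 * A$1$1 * A$2$2 * A$3$0 * A$4$3 - A$0$4 * A$1$1 * A$2$2 * A$3$3 * A$4$0 - A$0$4 * A$1$1 * A$2$3 * A$3$0 * A$4$2 + A$0$4 * A$1$1 * A$2$3 * A$3$2 * A$4$0 + A$0$4 * A$1$2 * A$2$0 * A$3$1 * A$4$3 - A$0$4 * A$1$2 *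 A$2$0 * A$3$3 * A$4$1 - A$0$4 * A$1$2 * A$2$1 * A$3$0 * A$4$3 + A$0$4 * A$1$2 * A$2$1 * A$3$3 * A$4$0 + A$0$4 * A$1$2 * A$2$3 * A$3$0 * A$4$1 - A$0$4 * A$1$2 * A$2$3 * A$3$1 * A$4$0 - A$0$4 * A$1$3 * A$2$0 * A$3$1 * A$4$2 + A$0$4 * A$1$3 * A$2$0 * A$3$2 * A$4$1 + A$0$4 * A$1$3 * A$2$1 * A$3$0 * A$4$2 - A$0$4 * A$1$3 * A$2$1 * A$3$2 * A$4$0 - A$0$4 * A$1$3 * A$2$2 * A$3$0 * A$4$1 + A$0$4 * A$1$3 * A$2$2 * A$3$1 * A$4$0"
proof -
  have f1: "finite {1,2,3,4::5}" "0 \<notin> {1,2,3,4::5}" by auto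
  have f2: "finite {2,3,4::5}" "1 \<notin> {2,3,4::5}" by auto
  have f3: "finite {3,4::5}" "2 \<notin> {3,4::5}" by auto
  have f4: "finite {4::5}" "3 \<notin> {4::5}" by auto
  show ?thesis
    unfolding det5_sum
    unfolding sum_over_permutations_insert[OF f1]
    unfolding sum_over_permutations_insert[OF f2]
    unfolding sum_over_permutations_insert[OF f3]
    unfolding sum_over_permutations_insert[OF f4]
    unfolding permutes_sing
    by (simp add: sign_swap_id permutation_swap_id permutation_compose sign_compose sign_id swap_id_eq algebra_simps)
qed
lemma CM_vals:
  fixes r :: cfg
  shows "CM r $ i $ j = CM_entry r (nat (Rep_bit1 i)) (nat (Rep_bit1 j))"
  by (simp add: CM_def)

lemma R5: "Rep_bit1 (0::5) = 0" "Rep_bit1 (1::5) = 1" "Rep_bit1 (2::5) = 2" "Rep_bit1 (3::5) = 3" "Rep_bit1 (4::5) = 4"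
  by (simp_all add: bit1.Rep_numeral bit1.Rep_0 bit1.Rep_1)

lemma rd_vals:
  "rd (a,b,c,d,e,f) 1 2 = a" "rd (a,b,c,d,e,f) 2 1 = a"
  "rd (a,b,c,d,e,f) 1 3 = b" "rd (a,b,c,d,e,f) 3 1 = b"
  "rd (a,b,c,d,e,f) 1 4 = c" "rd (a,b,c,d,e,f) 4 1 = c"
  "rd (a,b,c,d,e,f) 2 3 = d" "rd (a,b,c,d,e,f) 3 2 = d"
  "rd (a,b,c,d,e,f) 2 4 = e" "rd (a,b,c,d,e,f) 4 2 = e"
  "rd (a,b,c,d,e,f) 3 4 = f" "rd (a,b,c,d,e,f) 4 3 = f"
  by (auto simp: doubleton_eq_iff)

lemma CM_e:
  fixes a b c d e f :: real
  shows "CM (a,b,c,d,e,f) $ 0 $ 0 = 0"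
   "CM (a,b,c,d,e,f) $ 0 $ 1 = 1"
   "CM (a,b,c,d,e,f) $ 0 $ 2 = 1"
   "CM (a,b,c,d,e,f) $ 0 $ 3 = 1"
   "CM (a,b,c,d,e,f) $ 0 $ 4 = 1"
   "CM (a,b,c,d,e,f) $ 1 $ 0 = 1"
   "CM (a,b,c,d,e,f) $ 1 $ 1 = 0"
   "CM (a,b,c,d,e,f) $ 1 $ 2 = a^2"
   "CM (a,b,c,d,e,f) $ 1 $ 3 = b^2"
   "CM (a,b,c,d,e,f) $ 1 $ 4 = c^2"
   "CM (a,b,c,d,e,f) $ 2 $ 0 = 1"
   "CM (a,b,c,d,e,f) $ 2 $ 1 = a^2"
   "CM (a,b,c,d,e,f) $ 2 $ 2 = 0"
   "CM (a,b,c,d,e,f) $ 2 $ 3 = d^2"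
   "CM (a,b,c,d,e,f) $ 2 $ 4 = e^2"
   "CM (a,b,c,d,e,f) $ 3 $ 0 = 1"
   "CM (a,b,c,d,e,f) $ 3 $ 1 = b^2"
   "CM (a,b,c,d,e,f) $ 3 $ 2 = d^2"
   "CM (a,b,c,d,e,f) $ 3 $ 3 = 0"
   "CM (a,b,c,d,e,f) $ 3 $ 4 = f^2"
   "CM (a,b,c,d,e,f) $ 4 $ 0 = 1"
   "CM (a,b,c,d,e,f) $ 4 $ 1 = c^2"
   "CM (a,b,c,d,e,f) $ 4 $ 2 = e^2"
   "CM (a,b,c,d,e,f) $ 4 $ 3 = f^2"
   "CM (a,b,c,d,e,f) $ 4 $ 4 = 0"
  by (simp_all add: CM_vals R5 CM_entry_def doubleton_eq_iff)

lemma H_formula: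
  fixes a b c d e f :: real
  shows "H (a,b,c,d,e,f) = 8 * (c^2*e^2*f^2 + 2*((c^2 + e^2 - a^2)/2)*((c^2 + f^2 - b^2)/2)*((e^2+f^2-d^2)/2)
     - c^2*((e^2+f^2-d^2)/2)^2 - e^2*((c^2 + f^2 - b^2)/2)^2 - f^2*((c^2 + e^2 - a^2)/2)^2)"
  unfolding H_def det5
  unfolding CM_e by (simp add: field_simps power2_eq_square)

lemma key_identity:
  fixes x12 x13 x14 x23 x24 x34 :: real
  shows "let g11 = x14; g22 = x24; g33 = x34;
    g12 = (x14 + x24 - x12)/2; g13 = (x14 + x34 - x13)/2; g23 = (x24 + x34 - x23)/2;
    dg = g11*g22*g33 + 2*g12*g13*g23 - g11*g23^2 - g22*g13^2 - g33*g12^2;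
    A11 = g22*g33 - g23^2; A12 = g13*g23 - g12*g33; A13 = g12*g23 - g13*g22;
    L = A11*x14 + A12*x24 + A13*x34;
    Her = 2*(x12*x34*x13*x24 + x13*x24*x14*x23 + x14*x23*x12*x34) - (x12*x34)^2 - (x13*x24)^2 - (x14*x23)^2
    in A11*g33*Her = 4*(g33*L^2 + dg*((g33*x24 - g23*x34)^2 + A11*x34^2))"
  by (simp add: Let_def field_simps power2_eq_square)

lemma PP_H0:
  assumes "r \<in> PP" shows "H r = 0"
proof -
  obtain a b c d e f where r: "r = (a,b,c,d,e,f)" by (cases r) auto
  have rG: "r \<in> G" and P0: "P r = 0" using assms by (auto simp: PP_def)
  have nn: "nonneg6 r" and H0: "H r \<ge> 0"
    and tri: "\<forall>i\<in>{1..4}. \<forall>j\<in>{1..4}. \<forall>k\<in>{1..4}. i \<noteq> j \<and> j \<noteq> k \<and> i \<noteq> k \<longrightarrow>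
              rd r i j + rd r j k > rd r i k" using rG by (auto simp: G_def)
  have t1: "d < e + f" using tri[rule_format, of 2 4 3] by (simp add: r doubleton_eq_iff)
  have t2: "e < d + f" using tri[rule_format, of 2 3 4] by (simp add: r doubleton_eq_iff)
  have t3: "f < d + e" using tri[rule_format, of 3 2 4] by (simp add: r doubleton_eq_iff)
  have d0: "d \<ge> 0" using nn[unfolded nonneg6_def, rule_format, of 2 3] by (simp add: r doubleton_eq_iff)
  have e0: "e \<ge> 0" using nn[unfolded nonneg6_def, rule_format, of 2 4] by (simp add: r doubleton_eq_iff)
  have fpos: "f > 0" using t1 t2 by linarith
  have P0': "a*f + c*d - b*e = 0" using P0 by (simp add: P_def r doubleton_eq_iff)
  show ?thesis
  proof (rule ccontr)
    assume "H r \<noteq> 0"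
    then have Hpos: "H r > 0" using H0 by simp
    define x12 where "x12 = a^2"
    define x13 where "x13 = b^2"
    define x14 where "x14 = c^2"
    define x23 where "x23 = d^2"
    define x24 where "x24 = e^2"
    define x34 where "x34 = f^2"
    define g11 where "g11 = x14"
    define g22 where "g22 = x24"
    define g33 where "g33 = x34"
    define g12 where "g12 = (x14 + x24 - x12)/2"
    define g13 where "g13 = (x14 + x34 - x13)/2"
    define g23 where "g23 = (x24 + x34 - x23)/2"
    define dg where "dg = g11*g22*g33 + 2*g12*g13*g23 - g11*g23^2 - g22*g13^2 - g33*g12^2"
    define A11 where "A11 = g22*g33 - g23^2"
    define A12 where "A12 = g13*g23 - g12*g33"
    define A13 where "A13 = g12*g23 - g13*g22"
    define L where "L = A11*x14 + A12*x24 + A13*x34"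
    define Her where "Her = 2*(x12*x34*x13*x24 + x13*x24*x14*x23 + x14*x23*x12*x34) - (x12*x34)^2 - (x13*x24)^2 - (x14*x23)^2"
    have id: "A11*g33*Her = 4*(g33*L^2 + dg*((g33*x24 - g23*x34)^2 + A11*x34^2))"
      using key_identity[of x14 x24 x34 x12 x13 x23]
      unfolding Let_def A11_def g33_def Her_def L_def dg_def A12_def A13_def g11_def g22_def g12_def g13_def g23_def
      by simp
    have Hd: "H r = 8 * dg"
      unfolding r H_formula dg_def g11_def g22_def g33_def g12_def g13_def g23_def
        x12_def x13_def x14_def x23_def x24_def x34_def by simp
    have dgpos: "dg > 0" using Hpos Hd by simp
    have A11e: "4*A11 = (d+e+f)*(-d+e+f)*(d-e+f)*(d+e-f)"
      unfolding A11_def g22_def g33_def g23_def x24_def x34_def x23_def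
      by (simp add: field_simps power2_eq_square)
    have "(d+e+f)*(-d+e+f)*(d-e+f)*(d+e-f) > 0"
      using t1 t2 t3 d0 e0 fpos by (intro mult_pos_pos) linarith+
    then have A11pos: "A11 > 0" using A11e by linarith
    have g33pos: "g33 > 0" "x34 > 0" using fpos by (simp_all add: g33_def x34_def)
    have "(g33*x24 - g23*x34)^2 + A11*x34^2 > 0"
      using A11pos g33pos by (intro add_nonneg_pos) simp_all
    then have "dg*((g33*x24 - g23*x34)^2 + A11*x34^2) > 0" using dgpos by simp
    moreover have "g33*L^2 \<ge> 0" using g33pos by simp
    ultimately have "0 < g33*L^2 + dg*((g33*x24 - g23*x34)^2 + A11*x34^2)"
      by (metis add_nonneg_pos)
    then have "A11*g33*Her > 0" unfolding id by simp
    then have Herpos: "Her > 0" using A11pos g33pos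
      by (metis mult_pos_pos zero_less_mult_pos)
    have "Her = (a*f+b*e+c*d)*(-(a*f)+b*e+c*d)*(a*f-b*e+c*d)*(a*f+b*e-c*d)"
      unfolding Her_def x12_def x13_def x14_def x23_def x24_def x34_def
      by (simp add: algebra_simps power2_eq_square)
    also have "\<dots> = 0" using P0' by simp
    finally show False using Herpos by simp
  qed
qed

theorem lemma1:
  fixes m :: "nat \<Rightarrow> real"
  assumes "\<forall>i\<in>{1..4::nat}. m i > 0"
  shows "(\<forall>r\<in>PP. H r = 0) \<and> DD m = Mplus m \<inter> G"
proof
  show "\<forall>r\<in>PP. H r = 0" using PP_H0 by blast
  show "DD m = Mplus m \<inter> G"
  proof
    show "DD m \<subseteq> Mplus m \<inter> G" by (auto simp: DD_def Mplus_def G_def)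
    show "Mplus m \<inter> G \<subseteq> DD m"
    proof
      fix r assume "r \<in> Mplus m \<inter> G"
      then have "r \<in> G" "Imom m r = 1" "P r = 0" by (auto simp: Mplus_def)
      moreover have "H r = 0" using PP_H0 calculation by (auto simp: PP_def)
      ultimately show "r \<in> DD m" by (auto simp: DD_def)
    qed
  qed
qed
end
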